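(* Let $n\ge 3$. For $1\le a,b\le n$ let $e^A_{a,b}=e_a e_b^T-e_b e_a^T\in\mathfrak{so}(n)$, where $e_1,\dots,e_n$ is the canonical basis of $\mathbf{R}^n$. For $2\le i<j\le n$ let $$E_{i,j}=\{C\in(\mathfrak{so}(n))^n:\ \rho(g^{\theta}_{i,j})(C)=C \text{ for all }\theta\in\mathbf{R}\}.$$ Then: (1) for $n=3$: $\bigcap_{2\le i<j\le n}E_{i,j}=E_{2,3}=\mathrm{span}\{e_2\otimes e^A_{2,1}+e_3\otimes e^A_{3,1},\ e_2\otimes e^A_{3,1}-e_3\otimes e^A_{2,1},\ e_1\otimes e^A_{2,3}\}$; (2) for $n=4$: $\bigcap_{2\le i<j\le n}E_{i,j}=\mathrm{span}\{e_2\otimes e^A_{2,1}+e_3\otimes e^A_{3,1}+e_4\otimes e^A_{4,1},\ e_2\otimes e^A_{3,4}-e_3\otimes e^A_{2,4}+e_4\otimes e^A_{2,3}\}$; (3) for $n\ge 5$: $\bigcap_{2\le i<j\le n}E_{i,j}=\mathrm{span}\{\sum_{k=1}^n e_k\otimes e^A_{k,1}\}$.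
   Context: $\mathfrak{so}(n)$ is the space of real antisymmetric $n\times n$ matrices. Elements of $(\mathfrak{so}(n))^n$ are $n$-tuples $C=(C_1,\dots,C_n)$; for $v\in\mathbf{R}^n$ and $M\in\mathfrak{so}(n)$, $v\otimes M$ denotes the tuple whose $\mu$-th entry is $v_\mu M$. The action $\rho$ of $SO(n)$ on $(\mathfrak{so}(n))^n$ is $\rho(g)(C)_\mu=\sum_{\nu=1}^n [g^{-1}]_{\nu,\mu}\, g\,C_\nu\, g^{-1}$. For $i<j$ and $\theta\in\mathbf{R}$, $g^\theta_{i,j}\in SO(n)$ is the rotation equal to the identity except for the entries $(i,i)=(j,j)=\cos\theta$, $(i,j)=-\sin\theta$, $(j,i)=\sin\theta$. *)

theory Defs
  imports Complex_Main
begin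

text \<open>Matrices are modelled as functions nat => nat => real, with indices 1..n
(entries outside {1..n} are zero).  An element C of (so(n))^n is modelled as
a function nat => nat => nat => real, where C mu is the mu-th matrix
(mu in 1..n) and C mu = 0 for mu outside 1..n.\<close>

type_synonym mat = "nat \<Rightarrow> nat \<Rightarrow> real"
type_synonym tup = "nat \<Rightarrow> nat \<Rightarrow> nat \<Rightarrow> real"

definition so :: "nat \<Rightarrow> mat set" where
  "so n = {M. (\<forall>i j. M i j = - M j i) \<and>
              (\<forall>i j. (i \<notin> {1..n} \<or> j \<notin> {1..n}) \<longrightarrow> M i j = 0)}"

definition soTuples :: "nat \<Rightarrow> tup set" where
  "soTuples n = {C. \<forall>\<mu>. (\<mu> \<in> {1..n} \<longrightarrow> C \<mu> \<in> so n) \<and> (\<mu> \<notin> {1..n} \<longrightarrow> C \<mu> = (\<lambda>_ _. 0))}"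

definition mmul :: "nat \<Rightarrow> mat \<Rightarrow> mat \<Rightarrow> mat" where
  "mmul n A B = (\<lambda>i j. \<Sum>k=1..n. A i k * B k j)"

definition mtrans :: "mat \<Rightarrow> mat" where
  "mtrans A = (\<lambda>i j. A j i)"

definition rot :: "nat \<Rightarrow> nat \<Rightarrow> nat \<Rightarrow> real \<Rightarrow> mat" where
  "rot n i j \<theta> = (\<lambda>a b.
     if a \<notin> {1..n} \<or> b \<notin> {1..n} then 0
     else if (a = i \<and> b = i) \<or> (a = j \<and> b = j) then cos \<theta>
     else if a = i \<and> b = j then - sin \<theta>
     else if a = j \<and> b = i then sin \<theta>
     else if a = b then 1 else 0)"

text \<open>The action rho(g)(C)_mu = sum_nu [g^{-1}]_{nu,mu} g C_nu g^{-1}, for g in SO(n),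
where g^{-1} is the transpose of g.\<close>
definition rho :: "nat \<Rightarrow> mat \<Rightarrow> tup \<Rightarrow> tup" where
  "rho n g C = (\<lambda>\<mu>. \<lambda>a b. if \<mu> \<notin> {1..n} then 0 else
      \<Sum>\<nu>=1..n. mtrans g \<nu> \<mu> * mmul n (mmul n g (C \<nu>)) (mtrans g) a b)"

definition Eset :: "nat \<Rightarrow> nat \<Rightarrow> nat \<Rightarrow> tup set" where
  "Eset n i j = {C \<in> soTuples n. \<forall>\<theta>::real. rho n (rot n i j \<theta>) C = C}"

definition evec :: "nat \<Rightarrow> nat \<Rightarrow> real" where
  "evec a = (\<lambda>i. if i = a then 1 else 0)"

definition eA :: "nat \<Rightarrow> nat \<Rightarrow> mat" where
  "eA a b = (\<lambda>i j. evec a i * evec b j - evec b i * evec a j)"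

definition tens :: "(nat \<Rightarrow> real) \<Rightarrow> mat \<Rightarrow> tup" where
  "tens v M = (\<lambda>\<mu> a b. v \<mu> * M a b)"

definition tadd :: "tup \<Rightarrow> tup \<Rightarrow> tup" (infixl "\<oplus>" 65) where
  "tadd C D = (\<lambda>\<mu> a b. C \<mu> a b + D \<mu> a b)"

definition tsub :: "tup \<Rightarrow> tup \<Rightarrow> tup" (infixl "\<ominus>" 65) where
  "tsub C D = (\<lambda>\<mu> a b. C \<mu> a b - D \<mu> a b)"

definition tspan :: "tup set \<Rightarrow> tup set" where
  "tspan S = {v. \<exists>F c. finite F \<and> F \<subseteq> S \<and>
                   v = (\<lambda>\<mu> a b. \<Sum>x\<in>F. c x * x \<mu> a b)}"

definition Eint :: "nat \<Rightarrow> tup set" where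
  "Eint n = \<Inter> {Eset n i j | i j. 2 \<le> i \<and> i < j \<and> j \<le> n}"

end

theory Submission
  imports Defs
begin

definition Rv :: "nat \<Rightarrow> nat \<Rightarrow> real \<Rightarrow> real \<Rightarrow> nat \<Rightarrow> (nat \<Rightarrow> real) \<Rightarrow> real" where
  "Rv i j c s x f = (if x = i then c * f i - s * f j else if x = j then s * f i + c * f j else f x)"

lemma row:
  assumes "i \<in> {1..n}" "j \<in> {1..n}" "i \<noteq> j" "x \<in> {1..n}"
  shows "(\<Sum>k=1..n. rot n i j \<theta> x k * f k) = Rv i j (cos \<theta>) (sin \<theta>) x f"
proof -
  have "(\<Sum>k=1..n. rot n i j \<theta> x k * f k) =
        (\<Sum>k=1..n. (if k = i then (if x = i then cos \<theta> * f i else if x = j then sin \<theta> * f i else 0) else 0)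
                 + (if k = j then (if x = i then - sin \<theta> * f j else if x = j then cos \<theta> * f j else 0) else 0)
                 + (if k = x \<and> x \<noteq> i \<and> x \<noteq> j then f x else 0))"
    by (rule sum.cong) (use assms in \<open>auto simp: rot_def\<close>)
  also have "\<dots> = Rv i j (cos \<theta>) (sin \<theta>) x f"
    using assms by (simp add: sum.distrib Rv_def)
  finally show ?thesis .
qed

definition RRR :: "nat \<Rightarrow> nat \<Rightarrow> real \<Rightarrow> real \<Rightarrow> tup \<Rightarrow> nat \<Rightarrow> nat \<Rightarrow> nat \<Rightarrow> real" where
  "RRR i j c s C \<mu> a b = Rv i j c s \<mu> (\<lambda>\<nu>. Rv i j c s b (\<lambda>l. Rv i j c s a (\<lambda>k. C \<nu> k l)))"

lemma rho_eq:
  assumes "i \<in> {1..n}" "j \<in> {1..n}" "i \<noteq> j" "\<mu> \<in> {1..n}" "a \<in> {1..n}" "b \<in> {1..n}"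
  shows "rho n (rot n i j \<theta>) C \<mu> a b = RRR i j (cos \<theta>) (sin \<theta>) C \<mu> a b"
proof -
  have 1: "mmul n (mmul n (rot n i j \<theta>) (C \<nu>)) (mtrans (rot n i j \<theta>)) a b
      = Rv i j (cos \<theta>) (sin \<theta>) b (\<lambda>l. Rv i j (cos \<theta>) (sin \<theta>) a (\<lambda>k. C \<nu> k l))" for \<nu>
  proof -
    have "mmul n (mmul n (rot n i j \<theta>) (C \<nu>)) (mtrans (rot n i j \<theta>)) a b
       = (\<Sum>l=1..n. rot n i j \<theta> b l * (\<Sum>k=1..n. rot n i j \<theta> a k * C \<nu> k l))"
      by (simp add: mmul_def mtrans_def mult.commute)
    also have "\<dots> = (\<Sum>l=1..n. rot n i j \<theta> b l * Rv i j (cos \<theta>) (sin \<theta>) a (\<lambda>k. C \<nu> k l))"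
      using row[OF assms(1-3,5)] by simp
    also have "\<dots> = Rv i j (cos \<theta>) (sin \<theta>) b (\<lambda>l. Rv i j (cos \<theta>) (sin \<theta>) a (\<lambda>k. C \<nu> k l))"
      by (rule row[OF assms(1-3,6)])
    finally show ?thesis .
  qed
  have "rho n (rot n i j \<theta>) C \<mu> a b = (\<Sum>\<nu>=1..n. rot n i j \<theta> \<mu> \<nu> *
     Rv i j (cos \<theta>) (sin \<theta>) b (\<lambda>l. Rv i j (cos \<theta>) (sin \<theta>) a (\<lambda>k. C \<nu> k l)))"
    using assms(4) unfolding rho_def 1 by (simp add: mtrans_def)
  also have "\<dots> = RRR i j (cos \<theta>) (sin \<theta>) C \<mu> a b"
    unfolding RRR_def by (rule row[OF assms(1-4)])
  finally show ?thesis .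
qed

lemma rot_out: "a \<notin> {1..n} \<Longrightarrow> rot n i j \<theta> a k = 0"
  by (simp add: rot_def)

lemma Eset_iff:
  assumes "i \<in> {1..n}" "j \<in> {1..n}" "i \<noteq> j"
  shows "C \<in> Eset n i j \<longleftrightarrow> C \<in> soTuples n \<and>
    (\<forall>\<theta>. \<forall>\<mu>\<in>{1..n}. \<forall>a\<in>{1..n}. \<forall>b\<in>{1..n}. RRR i j (cos \<theta>) (sin \<theta>) C \<mu> a b = C \<mu> a b)"
proof
  assume "C \<in> Eset n i j"
  then show "C \<in> soTuples n \<and>
    (\<forall>\<theta>. \<forall>\<mu>\<in>{1..n}. \<forall>a\<in>{1..n}. \<forall>b\<in>{1..n}. RRR i j (cos \<theta>) (sin \<theta>) C \<mu> a b = C \<mu> a b)"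
    using rho_eq[OF assms, of _ _ _ _ C] unfolding Eset_def by auto
next
  assume H: "C \<in> soTuples n \<and>
    (\<forall>\<theta>. \<forall>\<mu>\<in>{1..n}. \<forall>a\<in>{1..n}. \<forall>b\<in>{1..n}. RRR i j (cos \<theta>) (sin \<theta>) C \<mu> a b = C \<mu> a b)"
  have "rho n (rot n i j \<theta>) C = C" for \<theta>
  proof (intro ext)
    fix \<mu> a b
    show "rho n (rot n i j \<theta>) C \<mu> a b = C \<mu> a b"
    proof (cases "\<mu> \<in> {1..n}")
      case False
      then show ?thesis using H by (simp add: rho_def soTuples_def)
    next
      case mu: True
      show ?thesis
      proof (cases "a \<in> {1..n} \<and> b \<in> {1..n}")
        case True
        then show ?thesis using H mu rho_eq[OF assms] by auto
      next
        case False
        have "C \<mu> \<in> so n" using H mu unfolding soTuples_def by blast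
        then have "C \<mu> a b = 0" using False unfolding so_def by blast
        moreover have "rho n (rot n i j \<theta>) C \<mu> a b = 0"
        proof (cases "a \<in> {1..n}")
          case True
          then have "b \<notin> {1..n}" using False by auto
          then show ?thesis by (simp add: rho_def mmul_def mtrans_def rot_out)
        next
          case False
          then show ?thesis by (simp add: rho_def mmul_def mtrans_def rot_out)
        qed
        ultimately show ?thesis by simp
      qed
    qed
  qed
  then show "C \<in> Eset n i j" using H by (simp add: Eset_def)
qed


lemma Rv_sum: "Rv i j c s x (\<lambda>k. \<Sum>y\<in>F. w y * f y k) = (\<Sum>y\<in>F. w y * Rv i j c s x (f y))"
  by (simp add: Rv_def sum_distrib_left sum_subtractf[symmetric] sum.distrib[symmetric] algebra_simps)

lemma RRR_sum: "RRR i j c s (\<lambda>\<mu> a b. \<Sum>y\<in>F. w y * y \<mu> a b) \<mu> a b = (\<Sum>y\<in>F. w y * RRR i j c s y \<mu> a b)"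
  unfolding RRR_def by (simp add: Rv_sum)

lemma soTuples_sum:
  assumes "F \<subseteq> soTuples n"
  shows "(\<lambda>\<mu> a b. \<Sum>y\<in>F. w y * y \<mu> a b) \<in> soTuples n"
proof -
  have A: "y \<mu> \<in> so n" if "y \<in> F" "\<mu> \<in> {1..n}" for y \<mu>
    using assms that unfolding soTuples_def by blast
  have B: "y \<mu> = (\<lambda>_ _. 0)" if "y \<in> F" "\<mu> \<notin> {1..n}" for y \<mu>
    using assms that unfolding soTuples_def by blast
  have A1: "y \<mu> a b = - y \<mu> b a" if "y \<in> F" "\<mu> \<in> {1..n}" for y \<mu> a b
    using A[OF that] unfolding so_def by blast
  have A2: "y \<mu> a b = 0" if "y \<in> F" "\<mu> \<in> {1..n}" "a \<notin> {1..n} \<or> b \<notin> {1..n}" for y \<mu> a b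
    using A[OF that(1,2)] that(3) unfolding so_def by blast
  have 1: "(\<Sum>y\<in>F. w y * y \<mu> a b) = - (\<Sum>y\<in>F. w y * y \<mu> b a)" if m: "\<mu> \<in> {1..n}" for \<mu> a b
    by (simp add: sum_negf[symmetric] A1[OF _ m, of _ a b])
  have 2: "(\<Sum>y\<in>F. w y * y \<mu> a b) = 0" if m: "\<mu> \<in> {1..n}" "a \<notin> {1..n} \<or> b \<notin> {1..n}" for \<mu> a b
    using A2[OF _ m] by (metis (no_types, lifting) mult_zero_right sum.neutral)
  have 3: "(\<lambda>a b. \<Sum>y\<in>F. w y * y \<mu> a b) = (\<lambda>_ _. 0)" if m: "\<mu> \<notin> {1..n}" for \<mu>
    using B[OF _ m] by simp
  show ?thesis
    unfolding soTuples_def so_def mem_Collect_eq using 1 2 3 by blast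
qed

lemma tspan_sub:
  assumes "i \<in> {1..n}" "j \<in> {1..n}" "i \<noteq> j" "S \<subseteq> Eset n i j"
  shows "tspan S \<subseteq> Eset n i j"
proof
  fix v assume "v \<in> tspan S"
  then obtain F c where F: "finite F" "F \<subseteq> S" and v: "v = (\<lambda>\<mu> a b. \<Sum>x\<in>F. c x * x \<mu> a b)"
    unfolding tspan_def by blast
  have FE: "F \<subseteq> Eset n i j" using F assms(4) by blast
  then have "F \<subseteq> soTuples n" unfolding Eset_def by blast
  then have so: "v \<in> soTuples n" unfolding v by (rule soTuples_sum)
  have inv: "RRR i j (cos \<theta>) (sin \<theta>) y \<mu> a b = y \<mu> a b"
    if "y \<in> F" "\<mu> \<in> {1..n}" "a \<in> {1..n}" "b \<in> {1..n}" for y \<theta> \<mu> a b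
    using FE that Eset_iff[OF assms(1-3)] by blast
  show "v \<in> Eset n i j"
    unfolding Eset_iff[OF assms(1-3)]
    using so by (simp add: v RRR_sum inv)
qed

lemma tspan_intro:
  assumes "finite F" "F \<subseteq> S" "v = (\<lambda>\<mu> a b. \<Sum>x\<in>F. c x * x \<mu> a b)"
  shows "v \<in> tspan S"
  using assms unfolding tspan_def by blast

lemma span1: "x \<in> S \<Longrightarrow> (\<lambda>\<mu> a b. t * x \<mu> a b) \<in> tspan S"
  by (rule tspan_intro[of "{x}" _ _ "\<lambda>_. t"]) auto

lemma span2:
  assumes "x \<in> S" "y \<in> S" "x \<noteq> y"
  shows "(\<lambda>\<mu> a b. t1 * x \<mu> a b + t2 * y \<mu> a b) \<in> tspan S"
  by (rule tspan_intro[of "{x,y}" _ _ "\<lambda>z. if z = x then t1 else t2"]) (use assms in auto)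

lemma span3:
  assumes "x \<in> S" "y \<in> S" "z \<in> S" "x \<noteq> y" "x \<noteq> z" "y \<noteq> z"
  shows "(\<lambda>\<mu> a b. t1 * x \<mu> a b + t2 * y \<mu> a b + t3 * z \<mu> a b) \<in> tspan S"
  by (rule tspan_intro[of "{x,y,z}" _ _ "\<lambda>w. if w = x then t1 else if w = y then t2 else t3"]) (use assms in \<open>auto simp: add.assoc\<close>)


lemma Eint_Eset: "C \<in> Eint n \<Longrightarrow> 2 \<le> i \<Longrightarrow> i < j \<Longrightarrow> j \<le> n \<Longrightarrow> C \<in> Eset n i j"
  unfolding Eint_def by blast

lemma inv_pt:
  assumes "C \<in> Eint n" "2 \<le> i" "i < j" "j \<le> n" "\<mu> \<in> {1..n}" "a \<in> {1..n}" "b \<in> {1..n}"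
  shows "RRR i j (cos \<theta>) (sin \<theta>) C \<mu> a b = C \<mu> a b"
proof -
  have "C \<in> Eset n i j" using Eint_Eset assms by blast
  then show ?thesis using Eset_iff[of i n j C] assms by auto
qed

lemma Eint_so: "C \<in> Eint n \<Longrightarrow> 3 \<le> n \<Longrightarrow> C \<in> soTuples n"
  using Eint_Eset[of C n 2 3] unfolding Eset_def by auto

lemma antisym:
  assumes "C \<in> Eint n" "3 \<le> n" "\<mu> \<in> {1..n}"
  shows "C \<mu> a b = - C \<mu> b a"
proof -
  have "C \<mu> \<in> so n" using Eint_so[OF assms(1,2)] assms(3) unfolding soTuples_def by blast
  then show ?thesis unfolding so_def by blast
qed

lemma diag0:
  assumes "C \<in> Eint n" "3 \<le> n" "\<mu> \<in> {1..n}"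
  shows "C \<mu> a a = 0"
  using antisym[OF assms, of a a] by simp

lemma kill:
  assumes "C \<in> Eint n" "p \<in> {2..n}" "q \<in> {2..n}" "p \<noteq> q"
    "\<mu> \<in> {1..n}" "a \<in> {1..n}" "b \<in> {1..n}"
    "(if \<mu> = p \<or> \<mu> = q then -1 else 1) * (if a = p \<or> a = q then -1 else 1) *
     (if b = p \<or> b = q then -1 else (1::real)) = -1"
  shows "C \<mu> a b = 0"
proof -
  define i where "i = min p q"
  define j where "j = max p q"
  have ij: "2 \<le> i" "i < j" "j \<le> n" using assms(2-4) unfolding i_def j_def by auto
  have pq: "(x = p \<or> x = q) \<longleftrightarrow> (x = i \<or> x = j)" for x
    unfolding i_def j_def by (auto simp: min_def max_def)
  have "RRR i j (cos pi) (sin pi) C \<mu> a b = C \<mu> a b"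
    by (rule inv_pt[OF assms(1) ij assms(5-7)])
  moreover have "RRR i j (cos pi) (sin pi) C \<mu> a b =
     (if \<mu> = i \<or> \<mu> = j then -1 else 1) * (if b = i \<or> b = j then -1 else 1) *
     (if a = i \<or> a = j then -1 else (1::real)) * C \<mu> a b"
    using ij by (simp add: RRR_def Rv_def)
  ultimately have "C \<mu> a b = - C \<mu> a b" using assms(8) unfolding pq
    by (simp add: mult.commute mult.left_commute)
  then show ?thesis by simp
qed

lemma quarter:
  assumes "C \<in> Eint n" "2 \<le> i" "i < j" "j \<le> n" "\<mu> \<in> {1..n}" "a \<in> {1..n}" "b \<in> {1..n}"
  shows "RRR i j 0 1 C \<mu> a b = C \<mu> a b"
  using inv_pt[OF assms, of "pi/2"] by simp

lemma diag_eq: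
  assumes "C \<in> Eint n" "\<mu> \<in> {2..n}"
  shows "C \<mu> \<mu> 1 = C 2 2 1"
proof (cases "\<mu> = 2")
  case False
  then have "RRR 2 \<mu> 0 1 C \<mu> \<mu> 1 = C \<mu> \<mu> 1"
    using assms by (intro quarter) auto
  then show ?thesis using False assms(2) by (simp add: RRR_def Rv_def)
qed simp

lemma q3: assumes "\<not> (2 \<le> \<mu> \<and> 2 \<le> a \<and> 2 \<le> b \<and> \<mu> \<noteq> a \<and> \<mu> \<noteq> b \<and> a \<noteq> b)"
  shows "\<exists>q\<in>{2,3,4::nat}. q \<noteq> \<mu> \<and> q \<noteq> a \<and> q \<noteq> b"
  using assms by (cases "\<mu> = 2"; cases "\<mu> = 3"; cases "a = 2"; cases "a=3"; cases "b = 2"; cases "b=3") auto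
lemma q4: "\<exists>q\<in>{2,3,4,5::nat}. q \<noteq> \<mu> \<and> q \<noteq> a \<and> q \<noteq> b"
  by (cases "\<mu> = 2"; cases "\<mu> = 3"; cases "a = 2"; cases "a=3"; cases "b = 2"; cases "b=3"; cases "\<mu> = 4"; cases "a=4"; cases "b=4") auto

lemma kill_mu:
  assumes "C \<in> Eint n" "\<mu> \<in> {2..n}" "q \<in> {2..n}" "a \<in> {1..n}" "b \<in> {1..n}"
    "a \<noteq> \<mu>" "b \<noteq> \<mu>" "q \<noteq> \<mu>" "q \<noteq> a" "q \<noteq> b"
  shows "C \<mu> a b = 0"
  using assms by (intro kill[OF assms(1,2,3)]) auto

lemma kill_a:
  assumes "C \<in> Eint n" "a \<in> {2..n}" "q \<in> {2..n}" "\<mu> \<in> {1..n}" "b \<in> {1..n}"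
    "\<mu> \<noteq> a" "b \<noteq> a" "q \<noteq> \<mu>" "q \<noteq> a" "q \<noteq> b"
  shows "C \<mu> a b = 0"
  using assms by (intro kill[OF assms(1,2,3)]) auto

lemma kill_b:
  assumes "C \<in> Eint n" "b \<in> {2..n}" "q \<in> {2..n}" "\<mu> \<in> {1..n}" "a \<in> {1..n}"
    "\<mu> \<noteq> b" "a \<noteq> b" "q \<noteq> \<mu>" "q \<noteq> a" "q \<noteq> b"
  shows "C \<mu> a b = 0"
  using assms by (intro kill[OF assms(1,2,3)]) auto

lemma gen_zero:
  assumes C: "C \<in> Eint n" and n: "4 \<le> n" and r: "\<mu> \<in> {1..n}" "a \<in> {1..n}" "b \<in> {1..n}"
    and h6: "\<not> (2 \<le> \<mu> \<and> 2 \<le> a \<and> 2 \<le> b \<and> \<mu> \<noteq> a \<and> \<mu> \<noteq> b \<and> a \<noteq> b)"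
    and h7: "\<not> (2 \<le> \<mu> \<and> a = \<mu> \<and> b = 1)" and h8: "\<not> (2 \<le> \<mu> \<and> a = 1 \<and> b = \<mu>)"
  shows "C \<mu> a b = 0"
proof (cases "a = b")
  case True
  then show ?thesis using diag0[OF C _ r(1)] n by simp
next
  case ab: False
  from q3[OF h6] obtain q where q: "q \<in> {2,3,4::nat}" "q \<noteq> \<mu> \<and> q \<noteq> a \<and> q \<noteq> b"
    by (erule bexE)
  have qr: "q \<in> {2..n}" using q(1) n by auto
  have qs: "q \<noteq> \<mu>" "q \<noteq> a" "q \<noteq> b" using q(2) by auto
  show ?thesis
  proof (cases "\<mu> = 1")
    case m1: True
    show ?thesis
    proof (cases "a = 1")
      case True
      have "b \<in> {2..n}" "\<mu> \<noteq> b" using r m1 ab True by auto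
      then show ?thesis using kill_b[OF C _ qr r(1,2) _ ab qs] by blast
    next
      case a1: False
      have "a \<in> {2..n}" "\<mu> \<noteq> a" "b \<noteq> a" using r m1 ab a1 by auto
      then show ?thesis using kill_a[OF C _ qr r(1,3) _ _ qs] by blast
    qed
  next
    case m1: False
    then have m2: "\<mu> \<in> {2..n}" using r by simp
    show ?thesis
    proof (cases "a = 1")
      case True
      have "b \<noteq> \<mu>" using h8 m2 True by auto
      moreover have "a \<noteq> \<mu>" using True m1 by simp
      ultimately show ?thesis using kill_mu[OF C m2 qr r(2,3) _ _ qs] by blast
    next
      case a1: False
      show ?thesis
      proof (cases "b = 1")
        case True
        have "a \<noteq> \<mu>" using h7 m2 True by auto
        moreover have "b \<noteq> \<mu>" using True m1 by simp
        ultimately show ?thesis using kill_mu[OF C m2 qr r(2,3) _ _ qs] by blast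
      next
        case b1: False
        have "2 \<le> a" "2 \<le> b" "2 \<le> \<mu>" using r a1 b1 m2 by auto
        then have "\<mu> = a \<or> \<mu> = b" using h6 ab by blast
        then show ?thesis
        proof
          assume "\<mu> = a"
          moreover have "b \<in> {2..n}" using r b1 by auto
          ultimately show ?thesis using kill_b[OF C _ qr r(1,2) _ ab qs] ab by auto
        next
          assume "\<mu> = b"
          moreover have "a \<in> {2..n}" using r a1 by auto
          ultimately show ?thesis using kill_a[OF C _ qr r(1,3) _ _ qs] ab by auto
        qed
      qed
    qed
  qed
qed

lemma gen_zero5:
  assumes C: "C \<in> Eint n" and n: "5 \<le> n" and r: "\<mu> \<in> {2..n}" "a \<in> {2..n}" "b \<in> {2..n}"
  shows "C \<mu> a b = 0"
proof (cases "a = b")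
  case True
  then show ?thesis using diag0[OF C] r n by simp
next
  case ab: False
  show ?thesis
  proof (cases "\<mu> = a \<or> \<mu> = b")
    case True
    have r1: "\<mu> \<in> {1..n}" "a \<in> {1..n}" "b \<in> {1..n}" using r by auto
    have "a \<noteq> 1" "b \<noteq> 1" using r by auto
    have "\<not> (2 \<le> \<mu> \<and> 2 \<le> a \<and> 2 \<le> b \<and> \<mu> \<noteq> a \<and> \<mu> \<noteq> b \<and> a \<noteq> b)"
      "\<not> (2 \<le> \<mu> \<and> a = \<mu> \<and> b = 1)" "\<not> (2 \<le> \<mu> \<and> a = 1 \<and> b = \<mu>)"
      using True \<open>a \<noteq> 1\<close> \<open>b \<noteq> 1\<close> by blast+
    moreover have "4 \<le> n" using n by simp
    ultimately show ?thesis using gen_zero[OF C _ r1] by blast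
  next
    case False
    from q4[of \<mu> a b] obtain q where q: "q \<in> {2,3,4,5::nat}" "q \<noteq> \<mu> \<and> q \<noteq> a \<and> q \<noteq> b"
      by (erule bexE)
    have qr: "q \<in> {2..n}" using q(1) n by auto
    have qs: "q \<noteq> \<mu>" "q \<noteq> a" "q \<noteq> b" using q(2) by auto
    have r1: "a \<in> {1..n}" "b \<in> {1..n}" using r by auto
    show ?thesis using kill_mu[OF C r(1) qr r1 _ _ qs] False by blast
  qed
qed


definition Tn :: "nat \<Rightarrow> tup" where
  "Tn n = (\<lambda>\<mu> a b. \<Sum>k=1..n. tens (evec k) (eA k 1) \<mu> a b)"

lemma Tval: "Tn n \<mu> a b = (if \<mu> \<in> {1..n} then (if a = \<mu> \<and> b = 1 then 1 else 0) - (if a = 1 \<and> b = \<mu> then 1 else 0) else 0)"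
proof -
  have e: "evec k \<mu> * (evec k a * evec 1 b - evec 1 a * evec k b) = (if k = \<mu> then (if a = \<mu> \<and> b = 1 then 1 else 0) - (if a = 1 \<and> b = \<mu> then 1 else 0) else (0::real))" for k
    by (cases "k = \<mu>"; cases "a = \<mu>"; cases "b = 1"; cases "a = 1"; cases "b = \<mu>") (simp_all add: evec_def)
  have "Tn n \<mu> a b = (\<Sum>k\<in>{1..n}. if k = \<mu> then (if a = \<mu> \<and> b = 1 then 1 else 0) - (if a = 1 \<and> b = \<mu> then 1 else 0) else 0)"
    unfolding Tn_def tens_def eA_def by (rule sum.cong) (simp_all only: e)
  then show ?thesis by (simp add: sum.delta')
qed

lemma Tv_out: "\<not> (\<mu> \<in> {1..n} \<and> a \<in> {1..n} \<and> b \<in> {1..n}) \<Longrightarrow> Tn n \<mu> a b = 0"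
  unfolding Tval by (cases "\<mu> \<in> {1..n}"; cases "a = \<mu>"; cases "b = 1"; cases "a = 1"; cases "b = \<mu>") auto

lemma Tv1: "\<mu> \<in> {2..n} \<Longrightarrow> Tn n \<mu> \<mu> 1 = 1"
  unfolding Tval by simp

lemma Tv2: "\<mu> \<in> {2..n} \<Longrightarrow> Tn n \<mu> 1 \<mu> = -1"
  unfolding Tval by simp

lemma Tv0: "\<not> (2 \<le> \<mu> \<and> a = \<mu> \<and> b = 1) \<Longrightarrow> \<not> (2 \<le> \<mu> \<and> a = 1 \<and> b = \<mu>) \<Longrightarrow> Tn n \<mu> a b = 0"
  unfolding Tval by (cases "\<mu> \<in> {1..n}"; cases "\<mu> = 1"; cases "a = \<mu>"; cases "b = 1"; cases "a = 1"; cases "b = \<mu>") auto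

lemma Tn_so: "Tn n \<in> soTuples n"
proof -
  have 1: "Tn n \<mu> a b = - Tn n \<mu> b a" for \<mu> a b
    unfolding Tval by (cases "\<mu> \<in> {1..n}"; cases "a = \<mu>"; cases "b = 1"; cases "a = 1"; cases "b = \<mu>") simp_all
  have 2: "Tn n \<mu> a b = 0" if "a \<notin> {1..n} \<or> b \<notin> {1..n}" for \<mu> a b
    using Tv_out that by blast
  have 3: "Tn n \<mu> = (\<lambda>_ _. 0)" if "\<mu> \<notin> {1..n}" for \<mu>
  proof (intro ext)
    fix a b show "Tn n \<mu> a b = 0" using that by (intro Tv_out) blast
  qed
  show ?thesis unfolding soTuples_def so_def mem_Collect_eq using 1 2 3 by blast
qed

definition T0 :: tup where
  "T0 \<mu> a b = (if a = \<mu> \<and> b = 1 then 1 else 0) - (if a = 1 \<and> b = \<mu> then 1 else 0)"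

definition dd :: "nat \<Rightarrow> nat \<Rightarrow> real" where "dd x y = (if x = y then 1 else 0)"

lemma T0_alt: "T0 \<nu> k l = dd k \<nu> * dd l 1 - dd k 1 * dd l \<nu>"
  unfolding T0_def dd_def by (cases "k = \<nu>"; cases "l = 1"; cases "k = 1"; cases "l = \<nu>") simp_all

lemma Rv_lin: "Rv i j c s x (\<lambda>k. f k * \<alpha> - g k * \<beta>) = Rv i j c s x f * \<alpha> - Rv i j c s x g * \<beta>"
  by (simp add: Rv_def algebra_simps)

lemma Rv_lin2: "Rv i j c s x (\<lambda>k. \<alpha> * f k - \<beta> * g k) = \<alpha> * Rv i j c s x f - \<beta> * Rv i j c s x g"
  by (simp add: Rv_def algebra_simps)

lemma Rv_lin3: "Rv i j c s x (\<lambda>k. f k * \<alpha> - \<beta> * g k) = Rv i j c s x f * \<alpha> - \<beta> * Rv i j c s x g"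
  by (simp add: Rv_def algebra_simps)

lemma Rv_d1: "1 \<noteq> i \<Longrightarrow> 1 \<noteq> j \<Longrightarrow> Rv i j c s x (\<lambda>k. dd k 1) = dd x 1"
  by (simp add: Rv_def dd_def)

lemma Rv_orth:
  assumes "i \<noteq> j" "c * c + s * s = 1"
  shows "Rv i j c s x (\<lambda>\<nu>. Rv i j c s a (\<lambda>k. dd k \<nu>)) = dd a x"
  using assms
  by (cases "x = i"; cases "x = j"; cases "a = i"; cases "a = j") (simp_all add: Rv_def dd_def algebra_simps)

lemma T0_inv:
  assumes "1 < i" "i < j" "c * c + s * s = 1"
  shows "RRR i j c s T0 \<mu> a b = T0 \<mu> a b"
proof -
  have ne: "1 \<noteq> i" "1 \<noteq> j" "i \<noteq> j" using assms by auto
  have "RRR i j c s T0 \<mu> a b = Rv i j c s \<mu> (\<lambda>\<nu>. Rv i j c s b (\<lambda>l.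
      Rv i j c s a (\<lambda>k. dd k \<nu>) * dd l 1 - Rv i j c s a (\<lambda>k. dd k 1) * dd l \<nu>))"
    unfolding RRR_def T0_alt Rv_lin ..
  also have "\<dots> = Rv i j c s \<mu> (\<lambda>\<nu>. Rv i j c s a (\<lambda>k. dd k \<nu>) * Rv i j c s b (\<lambda>l. dd l 1) - Rv i j c s a (\<lambda>k. dd k 1) * Rv i j c s b (\<lambda>l. dd l \<nu>))"
    unfolding Rv_lin2 ..
  also have "\<dots> = Rv i j c s \<mu> (\<lambda>\<nu>. Rv i j c s a (\<lambda>k. dd k \<nu>) * dd b 1 - dd a 1 * Rv i j c s b (\<lambda>l. dd l \<nu>))"
    unfolding Rv_d1[OF ne(1,2)] ..
  also have "\<dots> = dd a \<mu> * dd b 1 - dd a 1 * dd b \<mu>"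
    unfolding Rv_lin3 Rv_orth[OF ne(3) assms(3)] ..
  finally show ?thesis unfolding T0_alt .
qed

lemma RRR_cong:
  assumes "\<And>x y z. x \<in> {1..n} \<Longrightarrow> y \<in> {1..n} \<Longrightarrow> z \<in> {1..n} \<Longrightarrow> C x y z = D x y z"
    "i \<in> {1..n}" "j \<in> {1..n}" "\<mu> \<in> {1..n}" "a \<in> {1..n}" "b \<in> {1..n}"
  shows "RRR i j c s C \<mu> a b = RRR i j c s D \<mu> a b"
  using assms(2-) by (simp add: RRR_def Rv_def assms(1))

lemma Tn_E:
  assumes "2 \<le> i" "i < j" "j \<le> n"
  shows "Tn n \<in> Eset n i j"
proof -
  have ij: "i \<in> {1..n}" "j \<in> {1..n}" "i \<noteq> j" using assms by auto
  have TT: "Tn n x y z = T0 x y z" if "x \<in> {1..n}" for x y z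
    using that by (simp add: Tval T0_def)
  have "RRR i j (cos t) (sin t) (Tn n) \<mu> a b = Tn n \<mu> a b"
    if "\<mu> \<in> {1..n}" "a \<in> {1..n}" "b \<in> {1..n}" for t \<mu> a b
  proof -
    have "RRR i j (cos t) (sin t) (Tn n) \<mu> a b = RRR i j (cos t) (sin t) T0 \<mu> a b"
      by (rule RRR_cong[OF _ ij(1,2) that]) (simp add: TT)
    also have "\<dots> = T0 \<mu> a b" using assms by (intro T0_inv) auto
    finally show ?thesis using TT that(1) by simp
  qed
  then show ?thesis using Tn_so Eset_iff[OF ij] by blast
qed

lemma sub_Eint: "(\<And>i j. 2 \<le> i \<Longrightarrow> i < j \<Longrightarrow> j \<le> n \<Longrightarrow> X \<subseteq> Eset n i j) \<Longrightarrow> X \<subseteq> Eint n"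
  unfolding Eint_def by blast

lemma big_sup: "tspan {Tn n} \<subseteq> Eint n"
proof (rule sub_Eint)
  fix i j assume h: "2 \<le> i" "i < j" "j \<le> n"
  show "tspan {Tn n} \<subseteq> Eset n i j"
    by (rule tspan_sub) (use h Tn_E[OF h] in auto)
qed

lemma so_zero:
  assumes "C \<in> soTuples n" "\<not> (\<mu> \<in> {1..n} \<and> a \<in> {1..n} \<and> b \<in> {1..n})"
  shows "C \<mu> a b = 0"
proof (cases "\<mu> \<in> {1..n}")
  case True
  then have "C \<mu> \<in> so n" using assms(1) unfolding soTuples_def by blast
  then show ?thesis using assms(2) True unfolding so_def by blast
next
  case False
  then have "C \<mu> = (\<lambda>_ _. 0)" using assms(1) unfolding soTuples_def by blast
  then show ?thesis by simp
qed

lemma big_sub: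
  assumes n: "5 \<le> n" and C: "C \<in> Eint n"
  shows "C \<in> tspan {Tn n}"
proof -
  have n3: "3 \<le> n" "4 \<le> n" using n by auto
  have so: "C \<in> soTuples n" by (rule Eint_so[OF C n3(1)])
  have "C \<mu> a b = C 2 2 1 * Tn n \<mu> a b" for \<mu> a b
  proof (cases "\<mu> \<in> {1..n} \<and> a \<in> {1..n} \<and> b \<in> {1..n}")
    case False
    then have "Tn n \<mu> a b = 0" by (rule Tv_out)
    then show ?thesis using so_zero[OF so False] by simp
  next
    case True
    then have r: "\<mu> \<in> {1..n}" "a \<in> {1..n}" "b \<in> {1..n}" by auto
    show ?thesis
    proof (cases "2 \<le> \<mu> \<and> a = \<mu> \<and> b = 1")
      case c1: True
      then have "C \<mu> a b = C 2 2 1" using diag_eq[OF C, of \<mu>] r by auto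
      moreover have "Tn n \<mu> a b = 1" using c1 r Tv1[of \<mu> n] by auto
      ultimately show ?thesis by simp
    next
      case c1: False
      show ?thesis
      proof (cases "2 \<le> \<mu> \<and> a = 1 \<and> b = \<mu>")
        case c2: True
        then have "C \<mu> a b = - C 2 2 1"
          using diag_eq[OF C, of \<mu>] antisym[OF C n3(1) r(1), of 1 \<mu>] r by auto
        moreover have "Tn n \<mu> a b = -1" using c2 r Tv2[of \<mu> n] by auto
        ultimately show ?thesis by simp
      next
        case c2: False
        have "Tn n \<mu> a b = 0" using c1 c2 by (rule Tv0)
        moreover have "C \<mu> a b = 0"
        proof (cases "2 \<le> \<mu> \<and> 2 \<le> a \<and> 2 \<le> b")
          case True
          then show ?thesis using gen_zero5[OF C n, of \<mu> a b] r by auto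
        next
          case False
          then show ?thesis using gen_zero[OF C n3(2) r] c1 c2 by blast
        qed
        ultimately show ?thesis by simp
      qed
    qed
  qed
  then have "C = (\<lambda>\<mu> a b. C 2 2 1 * Tn n \<mu> a b)" by (intro ext)
  then show ?thesis using span1[of "Tn n" "{Tn n}" "C 2 2 1"] by simp
qed

lemma big: "5 \<le> n \<Longrightarrow> Eint n = tspan {(\<lambda>\<mu> a b. \<Sum>k=1..n. tens (evec k) (eA k 1) \<mu> a b)}"
  using big_sub[of n] big_sup[of n] unfolding Tn_def[symmetric] by blast


lemma four: "{1..4::nat} = {1,2,3,4}" by auto
lemma three: "{1..3::nat} = {1,2,3}" by auto

lemma tens_so:
  assumes "k \<in> {1..n}" "x \<in> {1..n}" "y \<in> {1..n}"
  shows "tens (evec k) (eA x y) \<in> soTuples n"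
proof -
  have 1: "tens (evec k) (eA x y) \<mu> a b = - tens (evec k) (eA x y) \<mu> b a" for \<mu> a b
    by (simp add: tens_def eA_def algebra_simps)
  have 2: "tens (evec k) (eA x y) \<mu> a b = 0" if "a \<notin> {1..n} \<or> b \<notin> {1..n}" for \<mu> a b
  proof -
    have "evec x a * evec y b = 0" "evec y a * evec x b = 0"
      using that assms by (auto simp: evec_def)
    then have "evec x a * evec y b - evec y a * evec x b = 0" by (metis diff_self)
    then show ?thesis unfolding tens_def eA_def by (metis mult_zero_right)
  qed
  have 3: "tens (evec k) (eA x y) \<mu> = (\<lambda>_ _. 0)" if "\<mu> \<notin> {1..n}" for \<mu>
  proof -
    have "evec k \<mu> = 0" using that assms by (auto simp: evec_def)
    then show ?thesis by (simp add: tens_def)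
  qed
  show ?thesis unfolding soTuples_def so_def mem_Collect_eq using 1 2 3 by blast
qed

lemma soTuples_I:
  assumes "\<And>\<mu> a b. \<mu> \<in> {1..n} \<Longrightarrow> X \<mu> a b = - X \<mu> b a"
    "\<And>\<mu> a b. \<mu> \<in> {1..n} \<Longrightarrow> a \<notin> {1..n} \<or> b \<notin> {1..n} \<Longrightarrow> X \<mu> a b = 0"
    "\<And>\<mu> a b. \<mu> \<notin> {1..n} \<Longrightarrow> X \<mu> a b = 0"
  shows "X \<in> soTuples n"
proof -
  have 3: "X \<mu> = (\<lambda>_ _. 0)" if "\<mu> \<notin> {1..n}" for \<mu>
    using assms(3)[OF that] by (intro ext)
  show ?thesis unfolding soTuples_def so_def mem_Collect_eq using assms(1,2) 3 by blast
qed

lemma soTuples_D: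
  assumes "X \<in> soTuples n"
  shows "\<mu> \<in> {1..n} \<Longrightarrow> X \<mu> a b = - X \<mu> b a"
    "\<mu> \<in> {1..n} \<Longrightarrow> a \<notin> {1..n} \<or> b \<notin> {1..n} \<Longrightarrow> X \<mu> a b = 0"
    "\<mu> \<notin> {1..n} \<Longrightarrow> X \<mu> a b = 0"
proof -
  show "\<mu> \<in> {1..n} \<Longrightarrow> X \<mu> a b = - X \<mu> b a"
    using assms unfolding soTuples_def so_def by blast
  show "\<mu> \<in> {1..n} \<Longrightarrow> a \<notin> {1..n} \<or> b \<notin> {1..n} \<Longrightarrow> X \<mu> a b = 0"
    using assms unfolding soTuples_def so_def by blast
  show "\<mu> \<notin> {1..n} \<Longrightarrow> X \<mu> a b = 0"
  proof -
    assume "\<mu> \<notin> {1..n}"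
    then have "X \<mu> = (\<lambda>_ _. 0)" using assms unfolding soTuples_def by blast
    then show ?thesis by simp
  qed
qed

lemma tadd_so:
  assumes "C \<in> soTuples n" "D \<in> soTuples n"
  shows "C \<oplus> D \<in> soTuples n"
proof (rule soTuples_I)
  fix \<mu> a b assume h: "\<mu> \<in> {1..n}"
  show "(C \<oplus> D) \<mu> a b = - (C \<oplus> D) \<mu> b a"
    using soTuples_D(1)[OF assms(1) h, of a b] soTuples_D(1)[OF assms(2) h, of a b] by (simp add: tadd_def)
next
  fix \<mu> a b assume h: "\<mu> \<in> {1..n}" "a \<notin> {1..n} \<or> b \<notin> {1..n}"
  show "(C \<oplus> D) \<mu> a b = 0"
    using soTuples_D(2)[OF assms(1) h] soTuples_D(2)[OF assms(2) h] by (simp add: tadd_def)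
next
  fix \<mu> a b assume h: "\<mu> \<notin> {1..n}"
  show "(C \<oplus> D) \<mu> a b = 0"
    using soTuples_D(3)[OF assms(1) h, of a b] soTuples_D(3)[OF assms(2) h, of a b] by (simp add: tadd_def)
qed

lemma tsub_so:
  assumes "C \<in> soTuples n" "D \<in> soTuples n"
  shows "C \<ominus> D \<in> soTuples n"
proof (rule soTuples_I)
  fix \<mu> a b assume h: "\<mu> \<in> {1..n}"
  show "(C \<ominus> D) \<mu> a b = - (C \<ominus> D) \<mu> b a"
    using soTuples_D(1)[OF assms(1) h, of a b] soTuples_D(1)[OF assms(2) h, of a b] by (simp add: tsub_def)
next
  fix \<mu> a b assume h: "\<mu> \<in> {1..n}" "a \<notin> {1..n} \<or> b \<notin> {1..n}"
  show "(C \<ominus> D) \<mu> a b = 0"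
    using soTuples_D(2)[OF assms(1) h] soTuples_D(2)[OF assms(2) h] by (simp add: tsub_def)
next
  fix \<mu> a b assume h: "\<mu> \<notin> {1..n}"
  show "(C \<ominus> D) \<mu> a b = 0"
    using soTuples_D(3)[OF assms(1) h, of a b] soTuples_D(3)[OF assms(2) h, of a b] by (simp add: tsub_def)
qed

lemma Eset_intro:
  assumes "i \<in> {1..n}" "j \<in> {1..n}" "i \<noteq> j" "B \<in> soTuples n"
    "\<And>c s. c * c + s * s = 1 \<Longrightarrow> \<forall>\<mu>\<in>{1..n}. \<forall>a\<in>{1..n}. \<forall>b\<in>{1..n}. RRR i j c s B \<mu> a b = B \<mu> a b"
  shows "B \<in> Eset n i j"
  using assms Eset_iff[OF assms(1-3)] sin_cos_squared_add3 by blast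

definition B41 :: tup where "B41 = tens (evec 2) (eA 2 1) \<oplus> tens (evec 3) (eA 3 1) \<oplus> tens (evec 4) (eA 4 1)"
definition B42 :: tup where "B42 = tens (evec 2) (eA 3 4) \<ominus> tens (evec 3) (eA 2 4) \<oplus> tens (evec 4) (eA 2 3)"

lemma B41_so: "B41 \<in> soTuples 4"
  unfolding B41_def by (intro tadd_so tens_so) auto
lemma B42_so: "B42 \<in> soTuples 4"
  unfolding B42_def by (intro tadd_so tsub_so tens_so) auto

lemmas Bdefs = tens_def evec_def eA_def tadd_def tsub_def

lemma B42_inv23:
  assumes "c * c + s * s = 1"
  shows "\<forall>\<mu>\<in>{1..4}. \<forall>a\<in>{1..4}. \<forall>b\<in>{1..4}. RRR 2 3 c s B42 \<mu> a b = B42 \<mu> a b"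
  using assms unfolding four
  by (simp add: RRR_def Rv_def B42_def Bdefs algebra_simps)

lemma B42_inv24:
  assumes "c * c + s * s = 1"
  shows "\<forall>\<mu>\<in>{1..4}. \<forall>a\<in>{1..4}. \<forall>b\<in>{1..4}. RRR 2 4 c s B42 \<mu> a b = B42 \<mu> a b"
  using assms unfolding four
  by (simp add: RRR_def Rv_def B42_def Bdefs algebra_simps)

lemma B42_inv34:
  assumes "c * c + s * s = 1"
  shows "\<forall>\<mu>\<in>{1..4}. \<forall>a\<in>{1..4}. \<forall>b\<in>{1..4}. RRR 3 4 c s B42 \<mu> a b = B42 \<mu> a b"
  using assms unfolding four
  by (simp add: RRR_def Rv_def B42_def Bdefs algebra_simps)

lemma B42_E: "2 \<le> i \<Longrightarrow> i < j \<Longrightarrow> j \<le> 4 \<Longrightarrow> B42 \<in> Eset 4 i j"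
proof -
  assume h: "2 \<le> i" "i < j" "j \<le> 4"
  then have "(i = 2 \<and> j = 3) \<or> (i = 2 \<and> j = 4) \<or> (i = 3 \<and> j = 4)" by auto
  moreover have "B42 \<in> Eset 4 2 3"
    by (rule Eset_intro[OF _ _ _ B42_so B42_inv23]) auto
  moreover have "B42 \<in> Eset 4 2 4"
    by (rule Eset_intro[OF _ _ _ B42_so B42_inv24]) auto
  moreover have "B42 \<in> Eset 4 3 4"
    by (rule Eset_intro[OF _ _ _ B42_so B42_inv34]) auto
  ultimately show ?thesis by blast
qed

lemma B41_Tn: "B41 = Tn 4"
proof (intro ext)
  fix \<mu> a b
  have e: "eA 1 1 a b = 0" "eA (Suc 0) (Suc 0) a b = 0" by (simp_all add: eA_def)
  show "B41 \<mu> a b = Tn 4 \<mu> a b"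
    unfolding Tn_def four B41_def by (simp add: tadd_def tens_def e)
qed

lemma B41_E: "2 \<le> i \<Longrightarrow> i < j \<Longrightarrow> j \<le> 4 \<Longrightarrow> B41 \<in> Eset 4 i j"
  unfolding B41_Tn by (rule Tn_E)


lemma B41_ne_B42: "B41 \<noteq> B42"
proof
  assume "B41 = B42"
  then have "B41 2 2 1 = B42 2 2 1" by simp
  then show False by (simp add: B41_def B42_def Bdefs)
qed

lemma E4_sup: "tspan {B41, B42} \<subseteq> Eint 4"
proof (rule sub_Eint)
  fix i j :: nat assume h: "2 \<le> i" "i < j" "j \<le> 4"
  show "tspan {B41, B42} \<subseteq> Eset 4 i j"
    by (rule tspan_sub) (use h B41_E[OF h] B42_E[OF h] in auto)
qed

lemma E4_sub:
  assumes C: "C \<in> Eint 4"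
  shows "C \<in> tspan {B41, B42}"
proof -
  define t1 where "t1 = C 2 2 1"
  define t2 where "t2 = C 2 3 4"
  have n: "3 \<le> (4::nat)" "4 \<le> (4::nat)" by auto
  have Z: "C \<mu> a b = 0" if "\<mu> \<in> {1..4}" "a \<in> {1..4}" "b \<in> {1..4}"
    "\<not> (2 \<le> \<mu> \<and> 2 \<le> a \<and> 2 \<le> b \<and> \<mu> \<noteq> a \<and> \<mu> \<noteq> b \<and> a \<noteq> b)"
    "\<not> (2 \<le> \<mu> \<and> a = \<mu> \<and> b = 1)" "\<not> (2 \<le> \<mu> \<and> a = 1 \<and> b = \<mu>)" for \<mu> a b
    by (rule gen_zero[OF C n(2) that])
  have d3: "C 3 3 1 = t1" unfolding t1_def by (rule diag_eq[OF C]) auto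
  have d4: "C 4 4 1 = t1" unfolding t1_def by (rule diag_eq[OF C]) auto
  have a2: "C 2 1 2 = - t1" unfolding t1_def using antisym[OF C n(1), of 2 1 2] by simp
  have a3: "C 3 1 3 = - t1" using antisym[OF C n(1), of 3 1 3] d3 by simp
  have a4: "C 4 1 4 = - t1" using antisym[OF C n(1), of 4 1 4] d4 by simp
  have e1: "C 2 4 3 = - t2" unfolding t2_def using antisym[OF C n(1), of 2 4 3] by simp
  have q1: "RRR 2 3 0 1 C 3 2 4 = C 3 2 4" by (rule quarter[OF C]) auto
  have e2: "C 3 2 4 = - t2" using q1 unfolding t2_def by (simp add: RRR_def Rv_def)
  have e3: "C 3 4 2 = t2" using antisym[OF C n(1), of 3 4 2] e2 by simp
  have q2: "RRR 2 4 0 1 C 4 2 3 = C 4 2 3" by (rule quarter[OF C]) auto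
  have e4: "C 4 2 3 = t2" using q2 e1 by (simp add: RRR_def Rv_def)
  have e5: "C 4 3 2 = - t2" using antisym[OF C n(1), of 4 3 2] e4 by simp
  have all: "\<forall>\<mu>\<in>{1..4}. \<forall>a\<in>{1..4}. \<forall>b\<in>{1..4}. C \<mu> a b = t1 * B41 \<mu> a b + t2 * B42 \<mu> a b"
    unfolding four
    using d3 d4 a2 a3 a4 e1 e2 e3 e4 e5 unfolding One_nat_def
    by (simp add: Z B41_def B42_def Bdefs, simp add: t1_def t2_def)
  have so: "C \<in> soTuples 4" by (rule Eint_so[OF C n(1)])
  have "C = (\<lambda>\<mu> a b. t1 * B41 \<mu> a b + t2 * B42 \<mu> a b)"
  proof (intro ext)
    fix \<mu> a b
    show "C \<mu> a b = t1 * B41 \<mu> a b + t2 * B42 \<mu> a b"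
    proof (cases "\<mu> \<in> {1..4} \<and> a \<in> {1..4} \<and> b \<in> {1..4}")
      case True
      then show ?thesis using all by blast
    next
      case False
      have "B41 \<mu> a b = 0" "B42 \<mu> a b = 0"
        using False soTuples_D(2,3)[OF B41_so] soTuples_D(2,3)[OF B42_so] by blast+
      then show ?thesis using so_zero[OF so False] by simp
    qed
  qed
  then show ?thesis using span2[of B41 "{B41, B42}" B42 t1 t2] B41_ne_B42 by simp
qed

lemma E4: "Eint 4 = tspan {B41, B42}"
  using E4_sub E4_sup by blast


definition B31 :: tup where "B31 = tens (evec 2) (eA 2 1) \<oplus> tens (evec 3) (eA 3 1)"
definition B32 :: tup where "B32 = tens (evec 2) (eA 3 1) \<ominus> tens (evec 3) (eA 2 1)"
definition B33 :: tup where "B33 = tens (evec 1) (eA 2 3)"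

lemma Eint3: "Eint 3 = Eset 3 2 3"
proof -
  have "{Eset 3 i j | i j. 2 \<le> i \<and> i < j \<and> j \<le> (3::nat)} = {Eset 3 2 3}"
  proof (intro equalityI subsetI)
    fix X assume "X \<in> {Eset 3 i j | i j. 2 \<le> i \<and> i < j \<and> j \<le> (3::nat)}"
    then obtain i j where "X = Eset 3 i j" "2 \<le> i" "i < j" "j \<le> (3::nat)" by blast
    moreover then have "i = 2" "j = 3" by auto
    ultimately show "X \<in> {Eset 3 2 3}" by simp
  next
    fix X assume "X \<in> {Eset 3 2 3}"
    then show "X \<in> {Eset 3 i j | i j. 2 \<le> i \<and> i < j \<and> j \<le> (3::nat)}" by force
  qed
  then show ?thesis unfolding Eint_def by simp
qed

lemma B31_so: "B31 \<in> soTuples 3"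
  unfolding B31_def by (intro tadd_so tens_so) auto
lemma B32_so: "B32 \<in> soTuples 3"
  unfolding B32_def by (intro tsub_so tens_so) auto
lemma B33_so: "B33 \<in> soTuples 3"
  unfolding B33_def by (intro tens_so) auto

lemma B31_inv:
  assumes "c * c + s * s = 1"
  shows "\<forall>\<mu>\<in>{1..3}. \<forall>a\<in>{1..3}. \<forall>b\<in>{1..3}. RRR 2 3 c s B31 \<mu> a b = B31 \<mu> a b"
  using assms unfolding three
  by (simp add: RRR_def Rv_def B31_def Bdefs algebra_simps)
lemma B32_inv:
  assumes "c * c + s * s = 1"
  shows "\<forall>\<mu>\<in>{1..3}. \<forall>a\<in>{1..3}. \<forall>b\<in>{1..3}. RRR 2 3 c s B32 \<mu> a b = B32 \<mu> a b"
  using assms unfolding three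
  by (simp add: RRR_def Rv_def B32_def Bdefs algebra_simps)
lemma B33_inv:
  assumes "c * c + s * s = 1"
  shows "\<forall>\<mu>\<in>{1..3}. \<forall>a\<in>{1..3}. \<forall>b\<in>{1..3}. RRR 2 3 c s B33 \<mu> a b = B33 \<mu> a b"
  using assms unfolding three
  by (simp add: RRR_def Rv_def B33_def Bdefs algebra_simps)

lemma E3_sup: "tspan {B31, B32, B33} \<subseteq> Eset 3 2 3"
proof (rule tspan_sub)
  have "B31 \<in> Eset 3 2 3" by (rule Eset_intro[OF _ _ _ B31_so B31_inv]) auto
  moreover have "B32 \<in> Eset 3 2 3" by (rule Eset_intro[OF _ _ _ B32_so B32_inv]) auto
  moreover have "B33 \<in> Eset 3 2 3" by (rule Eset_intro[OF _ _ _ B33_so B33_inv]) auto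
  ultimately show "{B31, B32, B33} \<subseteq> Eset 3 2 3" by blast
qed auto

lemma B3_ne: "B31 \<noteq> B32" "B31 \<noteq> B33" "B32 \<noteq> B33"
proof -
  show "B31 \<noteq> B32"
  proof
    assume "B31 = B32"
    then have "B31 2 2 1 = B32 2 2 1" by simp
    then show False by (simp add: B31_def B32_def Bdefs)
  qed
  show "B31 \<noteq> B33"
  proof
    assume "B31 = B33"
    then have "B31 2 2 1 = B33 2 2 1" by simp
    then show False by (simp add: B31_def B33_def Bdefs)
  qed
  show "B32 \<noteq> B33"
  proof
    assume "B32 = B33"
    then have "B32 2 3 1 = B33 2 3 1" by simp
    then show False by (simp add: B32_def B33_def Bdefs)
  qed
qed

lemma E3_sub:
  assumes C0: "C \<in> Eset 3 2 3"
  shows "C \<in> tspan {B31, B32, B33}"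
proof -
  have C: "C \<in> Eint 3" using C0 Eint3 by simp
  define t1 where "t1 = C 2 2 1"
  define t2 where "t2 = C 2 3 1"
  define t3 where "t3 = C 1 2 3"
  have n: "3 \<le> (3::nat)" by simp
  have Z: "C \<mu> a b = 0" if "\<mu> \<in> {1..3}" "a \<in> {1..3}" "b \<in> {1..3}"
    "(if \<mu> = 2 \<or> \<mu> = 3 then -1 else 1) * (if a = 2 \<or> a = 3 then -1 else 1) *
     (if b = 2 \<or> b = 3 then -1 else (1::real)) = -1" for \<mu> a b
    by (rule kill[OF C _ _ _ that]) auto
  have D: "C \<mu> a a = 0" if "\<mu> \<in> {1..3}" for \<mu> a
    by (rule diag0[OF C n that])
  have d3: "C 3 3 1 = t1" unfolding t1_def by (rule diag_eq[OF C]) auto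
  have a2: "C 2 1 2 = - t1" unfolding t1_def using antisym[OF C n, of 2 1 2] by simp
  have a3: "C 3 1 3 = - t1" using antisym[OF C n, of 3 1 3] d3 by simp
  have q1: "RRR 2 3 0 1 C 3 2 1 = C 3 2 1" by (rule quarter[OF C]) auto
  have e1: "C 3 2 1 = - t2" using q1 unfolding t2_def by (simp add: RRR_def Rv_def)
  have e2: "C 2 1 3 = - t2" unfolding t2_def using antisym[OF C n, of 2 1 3] by simp
  have e3: "C 3 1 2 = t2" using antisym[OF C n, of 3 1 2] e1 by simp
  have e4: "C 1 3 2 = - t3" unfolding t3_def using antisym[OF C n, of 1 3 2] by simp
  have all: "\<forall>\<mu>\<in>{1..3}. \<forall>a\<in>{1..3}. \<forall>b\<in>{1..3}. C \<mu> a b = t1 * B31 \<mu> a b + t2 * B32 \<mu> a b + t3 * B33 \<mu> a b"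
    unfolding three using d3 a2 a3 e1 e2 e3 e4 unfolding One_nat_def
    by (simp add: Z D B31_def B32_def B33_def Bdefs, simp add: t1_def t2_def t3_def)
  have so: "C \<in> soTuples 3" by (rule Eint_so[OF C n])
  have "C = (\<lambda>\<mu> a b. t1 * B31 \<mu> a b + t2 * B32 \<mu> a b + t3 * B33 \<mu> a b)"
  proof (intro ext)
    fix \<mu> a b
    show "C \<mu> a b = t1 * B31 \<mu> a b + t2 * B32 \<mu> a b + t3 * B33 \<mu> a b"
    proof (cases "\<mu> \<in> {1..3} \<and> a \<in> {1..3} \<and> b \<in> {1..3}")
      case True
      then show ?thesis using all by blast
    next
      case False
      have "B31 \<mu> a b = 0" "B32 \<mu> a b = 0" "B33 \<mu> a b = 0"
        using False soTuples_D(2,3)[OF B31_so] soTuples_D(2,3)[OF B32_so] soTuples_D(2,3)[OF B33_so] by blast+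
      then show ?thesis using so_zero[OF so False] by simp
    qed
  qed
  then show ?thesis using span3[of B31 "{B31, B32, B33}" B32 B33 t1 t2 t3] B3_ne by simp
qed

lemma E3: "Eset 3 2 3 = tspan {B31, B32, B33}"
  using E3_sub E3_sup by blast


theorem mainTheorem1:
  shows "(Eint 3 = Eset 3 2 3 \<and>
          Eset 3 2 3 = tspan {tens (evec 2) (eA 2 1) \<oplus> tens (evec 3) (eA 3 1),
                              tens (evec 2) (eA 3 1) \<ominus> tens (evec 3) (eA 2 1),
                              tens (evec 1) (eA 2 3)})
       \<and> Eint 4 = tspan {tens (evec 2) (eA 2 1) \<oplus> tens (evec 3) (eA 3 1) \<oplus> tens (evec 4) (eA 4 1),
                         tens (evec 2) (eA 3 4) \<ominus> tens (evec 3) (eA 2 4) \<oplus> tens (evec 4) (eA 2 3)}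
       \<and> (\<forall>n::nat. n \<ge> 5 \<longrightarrow>
            Eint n = tspan {(\<lambda>\<mu> a b. \<Sum>k=1..n. tens (evec k) (eA k 1) \<mu> a b)})"
proof (intro conjI allI impI)
  show "Eint 3 = Eset 3 2 3" by (rule Eint3)
  show "Eset 3 2 3 = tspan {tens (evec 2) (eA 2 1) \<oplus> tens (evec 3) (eA 3 1),
                              tens (evec 2) (eA 3 1) \<ominus> tens (evec 3) (eA 2 1),
                              tens (evec 1) (eA 2 3)}"
    using E3 unfolding B31_def B32_def B33_def .
  show "Eint 4 = tspan {tens (evec 2) (eA 2 1) \<oplus> tens (evec 3) (eA 3 1) \<oplus> tens (evec 4) (eA 4 1),
                         tens (evec 2) (eA 3 4) \<ominus> tens (evec 3) (eA 2 4) \<oplus> tens (evec 4) (eA 2 3)}"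
    using E4 unfolding B41_def B42_def .
  fix n :: nat assume "5 \<le> n"
  then show "Eint n = tspan {(\<lambda>\<mu> a b. \<Sum>k=1..n. tens (evec k) (eA k 1) \<mu> a b)}" by (rule big)
qed

end
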